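(* Let $0<\varepsilon\le1/4$, $\beta>1$, and define $\psi_{\varepsilon,\beta}:[0,1]\to[0,1]$ by $\psi_{\varepsilon,\beta}(x)=x$ for $x\in[0,\varepsilon]$, $\psi_{\varepsilon,\beta}(x)=\varepsilon+(1-2\varepsilon)^{1-\beta}(x-\varepsilon)^\beta$ for $x\in[\varepsilon,1-\varepsilon]$, and $\psi_{\varepsilon,\beta}(x)=x$ for $x\in[1-\varepsilon,1]$. For $n\ge1$ let $$d_n=\int_0^1\int_0^{\psi_{\varepsilon,\beta}(x_1)}\int_0^{\psi_{\varepsilon,\beta}(x_2)}\cdots\int_0^{\psi_{\varepsilon,\beta}(x_{n-1})}dx_n\cdots dx_1 .$$ Then (1) for $n=1,2,\dots$, $$d_n=\frac{(2\varepsilon)^n}{n!}+\frac{(1-2\varepsilon)(2\varepsilon)^{n-1}}{(n-1)!}+\sum_{l=2}^n\frac{(1-2\varepsilon)^l(2\varepsilon)^{n-l}}{(n-l)!\,(1+\beta)(1+\beta+\beta^2)\cdots(1+\beta+\dots+\beta^{l-1})};$$ (2) there is a constant $C(\varepsilon,\beta)$ not depending on $n$ such that $d_n<C(\varepsilon,\beta)\frac{(4\varepsilon)^n}{n!}$ for $n=1,2,\dots$. *)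

theory Defs
  imports "HOL-Analysis.Analysis"
begin

definition psi :: "real \<Rightarrow> real \<Rightarrow> real \<Rightarrow> real" where
  "psi eps beta x =
     (if x \<le> eps then x
      else if x \<le> 1 - eps then eps + (1 - 2*eps) powr (1 - beta) * (x - eps) powr beta
      else x)"

text \<open>Inner iterated integrals: iint k x = integral over 0 <= y <= psi(x) of iint (k-1) y,
  with iint 0 = 1.  So iint k x_j is the integral over x_{j+1},...,x_{j+k}.\<close>
fun iint :: "real \<Rightarrow> real \<Rightarrow> nat \<Rightarrow> real \<Rightarrow> real" where
  "iint eps beta 0 x = 1"
| "iint eps beta (Suc k) x = integral {0..psi eps beta x} (iint eps beta k)"

definition d :: "real \<Rightarrow> real \<Rightarrow> nat \<Rightarrow> real" where
  "d eps beta n = integral {0..1} (iint eps beta (n - 1))"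

end

theory Submission
  imports Defs
begin

definition S :: "real \<Rightarrow> nat \<Rightarrow> real" where "S b l = (\<Sum>i=0..l. b^i)"
definition P :: "real \<Rightarrow> nat \<Rightarrow> real" where "P b l = (\<Prod>j=1..l-1. S b j)"

lemma S_Suc: "S b (Suc l) = 1 + b * S b l"
  unfolding S_def by (subst sum.atLeast0_atMost_Suc_shift) (simp add: sum_distrib_left)

lemma S_ge1: "b > 0 \<Longrightarrow> S b l \<ge> 1"
proof -
  assume "b > 0"
  have "S b l = 1 + (\<Sum>i=1..l. b^i)" unfolding S_def by (simp add: sum.atLeast_Suc_atMost)
  moreover have "(\<Sum>i=1..l. b^i) \<ge> 0" using \<open>b>0\<close> by (intro sum_nonneg) auto
  ultimately show ?thesis by simp
qed

lemma S_ge_pow: "b > 0 \<Longrightarrow> S b l \<ge> b^l"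
  unfolding S_def
  by (intro member_le_sum) auto

lemma P_Suc: "P b (Suc l) = P b l * S b l"
proof (cases l)
  case 0 then show ?thesis by (simp add: P_def S_def)
next
  case (Suc m) then show ?thesis by (simp add: P_def prod.cl_ivl_Suc)
qed

lemma P_pos: "b > 0 \<Longrightarrow> P b l > 0"
  unfolding P_def using S_ge1 by (intro prod_pos) (auto intro: less_le_trans[OF zero_less_one])

locale L =
  fixes e b :: real
  assumes e0: "0 < e" and e4: "e \<le> 1/4" and b1: "b > 1"
begin

abbreviation "c \<equiv> 1 - 2*e"

lemma c_ge: "c \<ge> 1/2" using e4 by simp
lemma c_pos: "c > 0" using e4 by simp
lemma b_pos: "b > 0" using b1 by simp
lemma Spos: "S b l > 0" using S_ge1[OF b_pos, of l] by simp
lemma Ppos: "P b l > 0" using P_pos[OF b_pos] .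

definition a :: "nat \<Rightarrow> nat \<Rightarrow> real" where
  "a k l = c^l * e^(k-l) / (fact (k-l) * P b l)"

definition A :: "nat \<Rightarrow> real" where "A k = (\<Sum>l\<le>k. a k l)"

definition H :: "nat \<Rightarrow> real \<Rightarrow> real" where
  "H k t = (\<Sum>l\<le>k. a k l * c * ((t - e)/c) powr S b l / S b l)"

definition g :: "nat \<Rightarrow> real \<Rightarrow> real" where
  "g k x = (if x \<le> e then x^k / fact k
            else if x \<le> 1 - e then (\<Sum>l\<le>k. a k l * ((x - e)/c) powr (S b l - 1))
            else (\<Sum>m\<le>k. A (k-m) * (x - (1-e))^m / fact m))"

definition Gf :: "nat \<Rightarrow> real \<Rightarrow> real" where
  "Gf k t = (if t \<le> e then t^(Suc k) / fact (Suc k)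
             else if t \<le> 1 - e then e^(Suc k) / fact (Suc k) + H k t
             else g (Suc k) t)"

lemma a0: "a k 0 = e^k / fact k"
  by (simp add: a_def P_def)

lemma aS: "a (Suc k) (Suc l) = c * a k l / S b l"
  using Spos[of l] Ppos[of l] by (simp add: a_def P_Suc field_simps)

lemma mid_alg:
  assumes "w > 0"
  shows "e^(Suc k)/fact(Suc k) + (\<Sum>l\<le>k. a k l * c * (w powr b) powr S b l / S b l)
       = (\<Sum>l\<le>Suc k. a (Suc k) l * w powr (S b l - 1))"
proof -
  have "(\<Sum>l\<le>Suc k. a (Suc k) l * w powr (S b l - 1))
      = a (Suc k) 0 * w powr (S b 0 - 1) + (\<Sum>l\<le>k. a (Suc k) (Suc l) * w powr (S b (Suc l) - 1))"
    by (rule sum.atMost_Suc_shift)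
  also have "a (Suc k) 0 * w powr (S b 0 - 1) = e^(Suc k)/fact(Suc k)"
    using assms by (simp add: a0 S_def)
  also have "(\<Sum>l\<le>k. a (Suc k) (Suc l) * w powr (S b (Suc l) - 1))
      = (\<Sum>l\<le>k. a k l * c * (w powr b) powr S b l / S b l)"
    by (rule sum.cong) (auto simp: aS S_Suc powr_powr)
  finally show ?thesis by simp
qed

lemma e_lt: "e < 1 - e" using e4 e0 by simp

lemma lower_int:
  assumes "0 \<le> s" "s \<le> e"
  shows "(g k has_integral s^(Suc k)/fact(Suc k)) {0..s}"
proof -
  have "((\<lambda>x. x^k/fact k) has_integral (s^(Suc k)/fact(Suc k) - 0^(Suc k)/fact(Suc k))) {0..s}"
  proof (rule fundamental_theorem_of_calculus_interior)
    show "continuous_on {0..s} (\<lambda>x. x^(Suc k)/fact(Suc k))" by (intro continuous_intros) auto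
    fix x assume "x \<in> {0<..<s}"
    have "((\<lambda>x. x^(Suc k)/fact(Suc k)) has_real_derivative (real (Suc k) * x^(Suc k - Suc 0))/fact(Suc k)) (at x)"
      by (intro DERIV_cdivide DERIV_pow)
    moreover have "(real (Suc k) * x^(Suc k - Suc 0))/fact(Suc k) = x^k/fact k"
      by (simp add: fact_Suc del: of_nat_Suc)
    ultimately have "((\<lambda>x. x^(Suc k)/fact(Suc k)) has_real_derivative x^k/fact k) (at x)" by simp
    then show "((\<lambda>x. x^(Suc k)/fact(Suc k)) has_vector_derivative x^k/fact k) (at x)"
      by (simp add: has_real_derivative_iff_has_vector_derivative)
  qed (use assms in auto)
  then have "((\<lambda>x. x^k/fact k) has_integral s^(Suc k)/fact(Suc k)) {0..s}" by simp
  then show ?thesis by (rule has_integral_eq[rotated]) (use assms in \<open>auto simp: g_def\<close>)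
qed

lemma mid_int:
  assumes "e \<le> t" "t \<le> 1 - e"
  shows "(g k has_integral H k t) {e..t}"
proof -
  have "(g k has_integral (H k t - H k e)) {e..t}"
  proof (rule fundamental_theorem_of_calculus_interior)
    have "continuous_on {e..t} (\<lambda>x. ((x-e)/c) powr S b l)" for l
      by (rule continuous_on_powr') (use c_pos Spos[of l] in \<open>auto intro!: continuous_intros\<close>)
    then show "continuous_on {e..t} (H k)" unfolding H_def
      by (intro continuous_on_sum continuous_on_divide continuous_on_mult_left continuous_on_const)
         (auto simp: Spos[THEN less_imp_neq, symmetric])
    fix x assume x: "x \<in> {e<..<t}"
    have "(H k has_real_derivative (\<Sum>l\<le>k. a k l * ((x-e)/c) powr (S b l - 1))) (at x)"
    proof -
      have d1: "((\<lambda>x. ((x-e)/c) powr S b l) has_real_derivative (S b l * ((x-e)/c) powr (S b l - 1)) * (1/c)) (at x)" for l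
      proof (rule DERIV_chain2[where f="\<lambda>z. z powr S b l"])
        show "((\<lambda>z. z powr S b l) has_real_derivative S b l * ((x-e)/c) powr (S b l - 1)) (at ((x-e)/c))"
          by (rule has_real_derivative_powr) (use x c_pos in auto)
        show "((\<lambda>x. (x-e)/c) has_real_derivative 1/c) (at x)"
          using e4 by (auto intro!: derivative_eq_intros)
      qed
      have "(H k has_real_derivative (\<Sum>l\<le>k. a k l * c * ((S b l * ((x-e)/c) powr (S b l - 1)) * (1/c)) / S b l)) (at x)"
        unfolding H_def by (intro DERIV_sum DERIV_cdivide DERIV_cmult d1)
      moreover have "(\<Sum>l\<le>k. a k l * c * ((S b l * ((x-e)/c) powr (S b l - 1)) * (1/c)) / S b l)
         = (\<Sum>l\<le>k. a k l * ((x-e)/c) powr (S b l - 1))"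
      proof (intro sum.cong refl)
        fix l
        have h: "\<And>A B C D::real. C \<noteq> 0 \<Longrightarrow> D \<noteq> 0 \<Longrightarrow> A*C*((D*B)*(1/C))/D = A*B" by simp
        show "a k l * c * ((S b l * ((x-e)/c) powr (S b l - 1)) * (1/c)) / S b l = a k l * ((x-e)/c) powr (S b l - 1)"
          by (rule h) (use c_pos Spos[of l] in auto)
      qed
      ultimately show ?thesis by simp
    qed
    moreover have "g k x = (\<Sum>l\<le>k. a k l * ((x-e)/c) powr (S b l - 1))"
      using x assms by (auto simp: g_def)
    ultimately show "(H k has_vector_derivative g k x) (at x)"
      by (simp add: has_real_derivative_iff_has_vector_derivative)
  qed (use assms in auto)
  moreover have "H k e = 0" unfolding H_def using Spos by simp
  ultimately show ?thesis by simp
qed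

lemma upper_int:
  assumes "1 - e \<le> t"
  shows "(g k has_integral (\<Sum>m\<le>k. A(k-m) * (t-(1-e))^(Suc m)/fact(Suc m))) {1-e..t}"
proof -
  define F where "F = (\<lambda>t. \<Sum>m\<le>k. A(k-m) * (t-(1-e))^(Suc m)/fact(Suc m))"
  have "(g k has_integral (F t - F (1-e))) {1-e..t}"
  proof (rule fundamental_theorem_of_calculus_interior)
    show "continuous_on {1-e..t} F" unfolding F_def
      by (intro continuous_intros) auto
    fix x assume x: "x \<in> {1-e<..<t}"
    have "(F has_real_derivative (\<Sum>m\<le>k. A (k-m) * (real (Suc m) * (x - (1-e))^(Suc m - 1) * 1) / fact (Suc m))) (at x)"
      unfolding F_def
      by (intro DERIV_sum DERIV_cdivide DERIV_cmult DERIV_power derivative_eq_intros) auto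
    moreover have "(\<Sum>m\<le>k. A (k-m) * (real (Suc m) * (x - (1-e))^(Suc m - 1) * 1) / fact (Suc m))
        = (\<Sum>m\<le>k. A (k-m) * (x - (1-e))^m / fact m)"
      by (rule sum.cong) (simp_all add: fact_Suc del: of_nat_Suc)
    ultimately have "(F has_real_derivative (\<Sum>m\<le>k. A (k-m) * (x - (1-e))^m / fact m)) (at x)" by simp
    moreover have "g k x = (\<Sum>m\<le>k. A (k-m) * (x - (1-e))^m / fact m)"
      using x assms e_lt by (auto simp: g_def)
    ultimately show "(F has_vector_derivative g k x) (at x)"
      by (simp add: has_real_derivative_iff_has_vector_derivative)
  qed (use assms in auto)
  moreover have "F (1-e) = 0" unfolding F_def by simp
  ultimately show ?thesis by (simp add: F_def)
qed

lemma Hend: "e^(Suc k)/fact(Suc k) + H k (1-e) = A (Suc k)"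
proof -
  have "(1 - e - e)/c = 1" using c_pos by simp
  then have "H k (1-e) = (\<Sum>l\<le>k. a k l * c * ((1::real) powr b) powr S b l / S b l)"
    unfolding H_def by simp
  then show ?thesis using mid_alg[of 1 k] by (simp add: A_def)
qed

lemma Gf_int:
  assumes "0 \<le> t" "t \<le> 1"
  shows "(g k has_integral Gf k t) {0..t}"
proof -
  have mid: "(g k has_integral e^(Suc k)/fact(Suc k) + H k s) {0..s}" if "e \<le> s" "s \<le> 1-e" for s
    by (rule has_integral_combine[of 0 e s, OF _ _ lower_int mid_int]) (use that e0 in auto)
  consider "t \<le> e" | "e < t" "t \<le> 1 - e" | "1 - e < t" by linarith
  then show ?thesis
  proof cases
    case 1 then show ?thesis using lower_int[of t k] assms by (simp add: Gf_def)
  next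
    case 2 then show ?thesis using mid[of t] by (simp add: Gf_def)
  next
    case 3
    have "(g k has_integral (e^(Suc k)/fact(Suc k) + H k (1-e)) + (\<Sum>m\<le>k. A(k-m) * (t-(1-e))^(Suc m)/fact(Suc m))) {0..t}"
      by (rule has_integral_combine[of 0 "1-e" t, OF _ _ mid upper_int]) (use 3 e_lt e0 in auto)
    moreover have "(e^(Suc k)/fact(Suc k) + H k (1-e)) + (\<Sum>m\<le>k. A(k-m) * (t-(1-e))^(Suc m)/fact(Suc m))
        = (\<Sum>m\<le>Suc k. A(Suc k-m) * (t-(1-e))^m/fact m)"
      unfolding Hend by (subst sum.atMost_Suc_shift) simp
    moreover have "Gf k t = (\<Sum>m\<le>Suc k. A(Suc k-m) * (t-(1-e))^m/fact m)"
      using 3 e_lt by (simp add: Gf_def g_def)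
    ultimately show ?thesis by simp
  qed
qed

lemma psi_mid:
  assumes "e < x" "x \<le> 1 - e"
  shows "psi e b x = e + c * ((x-e)/c) powr b"
proof -
  have "c powr (1-b) * (x-e) powr b = c * ((x-e)/c) powr b"
    using c_pos assms by (simp add: powr_divide powr_diff)
  then show ?thesis using assms by (simp add: psi_def)
qed

lemma iint_eq: "x \<in> {0..1} \<Longrightarrow> iint e b k x = g k x"
proof (induction k arbitrary: x)
  case 0
  then show ?case by (auto simp: g_def a_def P_def S_def A_def)
next
  case (Suc k)
  have gen: "iint e b (Suc k) x = Gf k (psi e b x)" if "0 \<le> psi e b x" "psi e b x \<le> 1"
  proof -
    have "iint e b (Suc k) x = integral {0..psi e b x} (g k)"
      using Suc.IH that by (auto intro!: integral_cong)
    also have "\<dots> = Gf k (psi e b x)"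
      by (rule integral_unique[OF Gf_int[OF that]])
    finally show ?thesis .
  qed
  consider "x \<le> e" | "e < x" "x \<le> 1 - e" | "1 - e < x" by linarith
  then show ?case
  proof cases
    case 1
    then have "psi e b x = x" by (simp add: psi_def)
    then show ?thesis using gen Suc.prems 1 by (simp add: Gf_def g_def)
  next
    case 3
    then have "psi e b x = x" using e_lt by (simp add: psi_def)
    then show ?thesis using gen Suc.prems 3 e_lt by (simp add: Gf_def g_def)
  next
    case 2
    define u where "u = (x-e)/c"
    have u: "0 < u" "u \<le> 1" using 2 c_pos e_lt by (auto simp: u_def field_simps)
    have ub: "0 < u powr b" "u powr b \<le> 1" using u b1 by (auto simp: powr_le1)
    have ps: "psi e b x = e + c * u powr b" using psi_mid[OF 2] by (simp add: u_def)
    have "c * u powr b \<le> c" using ub c_pos by (intro mult_left_le) auto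
    moreover have "0 < c * u powr b" using ub c_pos by simp
    ultimately have ps2: "e < psi e b x" "psi e b x \<le> 1 - e" using ps
      by linarith+
    have q: "(psi e b x - e)/c = u powr b" using ps c_pos by simp
    have "iint e b (Suc k) x = e^(Suc k)/fact(Suc k) + H k (psi e b x)"
      using gen ps2 e0 by (simp add: Gf_def)
    also have "\<dots> = (\<Sum>l\<le>Suc k. a (Suc k) l * u powr (S b l - 1))"
      unfolding H_def q by (rule mid_alg[OF u(1)])
    also have "\<dots> = g (Suc k) x" using 2 by (simp add: g_def u_def)
    finally show ?thesis .
  qed
qed

lemma d_A: "n \<ge> 1 \<Longrightarrow> d e b n = (\<Sum>m\<le>n. A(n-m) * e^m / fact m)"
proof -
  assume n: "n \<ge> 1"
  have "d e b n = integral {0..1} (g (n-1))"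
    unfolding d_def by (rule integral_cong) (auto simp: iint_eq)
  also have "\<dots> = Gf (n-1) 1" by (rule integral_unique[OF Gf_int]) auto
  also have "\<dots> = g n 1" using n e0 e_lt by (simp add: Gf_def)
  also have "\<dots> = (\<Sum>m\<le>n. A(n-m) * e^m / fact m)" using e0 e_lt by (simp add: g_def)
  finally show ?thesis .
qed

lemma tri_swap: fixes n :: nat and F :: "nat \<Rightarrow> nat \<Rightarrow> real" shows "(\<Sum>m\<le>n. \<Sum>l\<le>n-m. F m l) = (\<Sum>l\<le>n. \<Sum>m\<le>n-l. (F m l::real))"
proof -
  have *: "(\<Sum>l\<le>n-m. F m l) = (\<Sum>l\<le>n. if m+l \<le> n then F m l else 0)" if "m \<le> n" for m
  proof -
    have "{..n} \<inter> {l. m+l \<le> n} = {..n-m}" using that by auto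
    note eq = this
    have "(\<Sum>l\<le>n-m. F m l) = sum ((F m)) ({..n} \<inter> {l. m+l \<le> n})" using eq by simp
    also have "\<dots> = (\<Sum>l\<le>n. if l \<in> {l. m+l \<le> n} then F m l else 0)" by (rule sum.inter_restrict) simp
    finally show ?thesis by simp
  qed
  have **: "(\<Sum>m\<le>n-l. F m l) = (\<Sum>m\<le>n. if m+l \<le> n then F m l else 0)" if "l \<le> n" for l
  proof -
    have "{..n} \<inter> {m. m+l \<le> n} = {..n-l}" using that by auto
    note eq = this
    have "(\<Sum>m\<le>n-l. F m l) = sum ((\<lambda>m. F m l)) ({..n} \<inter> {m. m+l \<le> n})" using eq by simp
    also have "\<dots> = (\<Sum>m\<le>n. if m \<in> {m. m+l \<le> n} then F m l else 0)" by (rule sum.inter_restrict) simp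
    finally show ?thesis by simp
  qed
  have "(\<Sum>m\<le>n. \<Sum>l\<le>n-m. F m l) = (\<Sum>m\<le>n. \<Sum>l\<le>n. if m+l \<le> n then F m l else 0)"
    by (rule sum.cong) (auto simp: *)
  also have "\<dots> = (\<Sum>l\<le>n. \<Sum>m\<le>n. if m+l \<le> n then F m l else 0)" by (rule sum.swap)
  also have "\<dots> = (\<Sum>l\<le>n. \<Sum>m\<le>n-l. F m l)"
    by (rule sum.cong) (auto simp: **)
  finally show ?thesis .
qed

lemma inv_fact_sum: "(\<Sum>m\<le>N. 1/(fact m * fact (N-m)) :: real) = 2^N/fact N"
proof -
  have "(\<Sum>m\<le>N. 1/(fact m * fact (N-m)) :: real) = (\<Sum>m\<le>N. real (N choose m) / fact N)"
  proof (rule sum.cong[OF refl])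
    fix m assume "m \<in> {..N}"
    then have "real (N choose m) = fact N/(fact m * fact (N-m))" by (simp add: binomial_fact)
    then show "1/(fact m * fact (N-m)) = real (N choose m) / (fact N :: real)" by simp
  qed
  also have "\<dots> = real (\<Sum>m\<le>N. N choose m) / fact N" by (simp add: sum_divide_distrib)
  also have "\<dots> = 2^N/fact N" by (simp add: choose_row_sum)
  finally show ?thesis .
qed

lemma d_T: "n \<ge> 1 \<Longrightarrow> d e b n = (\<Sum>l\<le>n. c^l * (2*e)^(n-l) / (fact (n-l) * P b l))"
proof -
  assume n: "n \<ge> 1"
  have "d e b n = (\<Sum>m\<le>n. \<Sum>l\<le>n-m. a (n-m) l * e^m / fact m)"
    unfolding d_A[OF n] A_def by (simp add: sum_distrib_right sum_divide_distrib)
  also have "\<dots> = (\<Sum>l\<le>n. \<Sum>m\<le>n-l. a (n-m) l * e^m / fact m)" by (rule tri_swap)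
  also have "\<dots> = (\<Sum>l\<le>n. c^l * e^(n-l) / P b l * (\<Sum>m\<le>n-l. 1/(fact m * fact (n-l-m))))"
  proof (rule sum.cong[OF refl])
    fix l assume l: "l \<in> {..n}"
    show "(\<Sum>m\<le>n-l. a (n-m) l * e^m / fact m) = c^l * e^(n-l) / P b l * (\<Sum>m\<le>n-l. 1/(fact m * fact (n-l-m)))"
      unfolding sum_distrib_left
    proof (rule sum.cong[OF refl])
      fix m assume m: "m \<in> {..n-l}"
      have "e^(n-l) = e^(n-m-l) * e^m" using m l by (simp add: power_add[symmetric])
      moreover have "n-m-l = n-l-m" by simp
      have h: "\<And>C X F Pp Y fm::real. C * X / (F * Pp) * Y / fm = C * (X*Y) / Pp * (1/(fm*F))"
        by (simp add: ac_simps)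
      show "a (n-m) l * e^m / fact m = c^l * e^(n-l) / P b l * (1/(fact m * fact (n-l-m)))"
        unfolding a_def \<open>e^(n-l) = _\<close> \<open>n-m-l = n-l-m\<close> by (rule h)
    qed
  qed
  also have "\<dots> = (\<Sum>l\<le>n. c^l * (2*e)^(n-l) / (fact (n-l) * P b l))"
  proof (rule sum.cong[OF refl])
    fix l
    have h: "\<And>C E Pp T F::real. C * E / Pp * (T / F) = C * (T*E)/(F*Pp)" by (simp add: ac_simps)
    show "c^l * e^(n-l) / P b l * (\<Sum>m\<le>n-l. 1/(fact m * fact (n-l-m))) = c^l * (2*e)^(n-l) / (fact (n-l) * P b l)"
      unfolding inv_fact_sum power_mult_distrib by (rule h)
  qed
  finally show ?thesis .
qed

lemma split_T: "n \<ge> 1 \<Longrightarrow> (\<Sum>l\<le>n. c^l * (2*e)^(n-l) / (fact (n-l) * P b l))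
   = (2*e)^n / fact n + c * (2*e)^(n-1) / fact (n-1) + (\<Sum>l=2..n. c^l * (2*e)^(n-l) / (fact (n-l) * P b l))"
proof -
  assume n: "n \<ge> 1"
  have "(\<Sum>l\<le>n. c^l * (2*e)^(n-l) / (fact (n-l) * P b l)) = (\<Sum>l=0..n. c^l * (2*e)^(n-l) / (fact (n-l) * P b l))"
    by (simp add: atMost_atLeast0)
  also have "\<dots> = c^0 * (2*e)^(n-0) / (fact (n-0) * P b 0) + (\<Sum>l=Suc 0..n. c^l * (2*e)^(n-l) / (fact (n-l) * P b l))"
    by (rule sum.atLeast_Suc_atMost) simp
  also have "(\<Sum>l=Suc 0..n. c^l * (2*e)^(n-l) / (fact (n-l) * P b l)) = c^(Suc 0) * (2*e)^(n-Suc 0) / (fact (n-Suc 0) * P b (Suc 0)) + (\<Sum>l=Suc (Suc 0)..n. c^l * (2*e)^(n-l) / (fact (n-l) * P b l))"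
    by (rule sum.atLeast_Suc_atMost) (use n in simp)
  moreover have "{Suc (Suc 0)..n} = {2..n}" by (simp add: numeral_2_eq_2)
  moreover have "P b 0 = 1" "P b (Suc 0) = 1" by (simp_all add: P_def)
  ultimately show ?thesis by simp
qed

definition R :: real where "R = c/(2*e)"
definition tt :: "nat \<Rightarrow> real" where "tt l = fact l * R^l / P b l"

lemma R_pos: "R > 0" using c_pos e0 by (simp add: R_def)

lemma tt_nonneg: "tt l \<ge> 0" using R_pos Ppos[of l] by (simp add: tt_def)

lemma tt_Suc: "tt (Suc l) = tt l * (real (Suc l) * R / S b l)"
proof -
  have h: "\<And>F Rl Pp Sl n r::real. Pp \<noteq> 0 \<Longrightarrow> Sl \<noteq> 0 \<Longrightarrow> (n * F) * (r * Rl) / (Pp * Sl) = F * Rl / Pp * (n * r / Sl)"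
    by (simp add: field_simps)
  show ?thesis unfolding tt_def P_Suc fact_Suc power_Suc
    by (rule h) (use Ppos[of l] Spos[of l] in auto)
qed

lemma tt_summable: "summable tt"
proof -
  have "(\<lambda>l. of_nat (Suc l) * (1/b)^(Suc l)) \<longlonglongrightarrow> 0"
    using LIMSEQ_Suc[OF powser_times_n_limit_0[of "1/b"]] b1 by simp
  then have "(\<lambda>l. R*b * (of_nat (Suc l) * (1/b)^(Suc l))) \<longlonglongrightarrow> R*b*0"
    by (intro tendsto_mult tendsto_const)
  then have "eventually (\<lambda>l. R*b * (of_nat (Suc l) * (1/b)^(Suc l)) < 1/2) sequentially"
    by (intro order_tendstoD(2)) auto
  then obtain N where N: "\<And>l. l \<ge> N \<Longrightarrow> R*b * (of_nat (Suc l) * (1/b)^(Suc l)) < 1/2"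
    by (auto simp: eventually_sequentially)
  show ?thesis
  proof (rule summable_ratio_test[of "1/2" N])
    fix l assume l: "l \<ge> N"
    have bl: "b^l > 0" using b_pos by simp
    have "real (Suc l) * R / S b l \<le> real (Suc l) * R / b^l"
      using S_ge_pow[OF b_pos, of l] bl R_pos by (intro divide_left_mono) auto
    also have "real (Suc l) * R / b^l = R*b * (of_nat (Suc l) * (1/b)^(Suc l))"
      using b_pos by (simp add: field_simps)
    also have "\<dots> < 1/2" using N[OF l] .
    finally have q: "real (Suc l) * R / S b l \<le> 1/2" by simp
    have "tt (Suc l) \<le> tt l * (1/2)"
      unfolding tt_Suc using q tt_nonneg[of l] by (intro mult_left_mono) auto
    then show "norm (tt (Suc l)) \<le> 1/2 * norm (tt l)"
      using tt_nonneg[of l] tt_nonneg[of "Suc l"] by simp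
  qed simp
qed

lemma tt_le: "tt l \<le> suminf tt"
  using sum_le_suminf[OF tt_summable, of "{l}"] tt_nonneg by simp

lemma T_eq:
  assumes "l \<le> n"
  shows "c^l * (2*e)^(n-l) / (fact (n-l) * P b l) = (4*e)^n / fact n * (real (n choose l) * tt l / 2^n)"
proof -
  have h: "\<And>C X Y Fn Fl Fm Tn Pp::real. Y \<noteq> 0 \<Longrightarrow> Fn \<noteq> 0 \<Longrightarrow> Fl \<noteq> 0 \<Longrightarrow> Tn \<noteq> 0 \<Longrightarrow>
     C * X / (Fm * Pp) = Tn * (X * Y) / Fn * ((Fn / (Fl * Fm)) * (Fl * (C / Y) / Pp) / Tn)"
    by (simp add: field_simps)
  have e2: "(2*e)^n = (2*e)^(n-l) * (2*e)^l" using assms by (metis le_add_diff_inverse2 power_add)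
  have "(4*e)^n = (2*(2*e))^n" by simp
  also have "\<dots> = 2^n * (2*e)^n" by (rule power_mult_distrib)
  finally have "(4*e)^n = 2^n * ((2*e)^(n-l) * (2*e)^l)" unfolding e2 .
  then show ?thesis unfolding tt_def R_def binomial_fact[OF assms] power_divide
    by (simp only:) (rule h, use e0 in auto)
qed

lemma d_bound: "n \<ge> 1 \<Longrightarrow> d e b n \<le> suminf tt * (4*e)^n / fact n"
proof -
  assume n: "n \<ge> 1"
  have "d e b n = (\<Sum>l\<le>n. (4*e)^n / fact n * (real (n choose l) * tt l / 2^n))"
    unfolding d_T[OF n] by (rule sum.cong[OF refl]) (rule T_eq, simp)
  also have "\<dots> \<le> (\<Sum>l\<le>n. (4*e)^n / fact n * (real (n choose l) * suminf tt / 2^n))"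
    using e0 tt_le by (intro sum_mono mult_left_mono divide_right_mono) auto
  also have "\<dots> = (4*e)^n / fact n * (real (\<Sum>l\<le>n. n choose l) * suminf tt / 2^n)"
    by (simp only: of_nat_sum sum_distrib_right sum_divide_distrib sum_distrib_left)
  also have "\<dots> = suminf tt * (4*e)^n / fact n"
    by (simp add: choose_row_sum)
  finally show ?thesis .
qed

end

theorem lemma4p5:
  fixes eps beta :: real
  assumes "0 < eps" and "eps \<le> 1/4" and "beta > 1"
  shows "(\<forall>n::nat. n \<ge> 1 \<longrightarrow>
            d eps beta n =
              (2*eps)^n / fact n
            + (1 - 2*eps) * (2*eps)^(n-1) / fact (n-1)
            + (\<Sum>l=2..n. (1 - 2*eps)^l * (2*eps)^(n-l) /
                 (fact (n-l) * (\<Prod>j=1..l-1. \<Sum>i=0..j. beta^i))))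
       \<and> (\<exists>C::real. \<forall>n::nat. n \<ge> 1 \<longrightarrow> d eps beta n < C * (4*eps)^n / fact n)"
proof -
  interpret L eps beta by unfold_locales (use assms in auto)
  have 1: "\<forall>n::nat. n \<ge> 1 \<longrightarrow>
            d eps beta n =
              (2*eps)^n / fact n
            + (1 - 2*eps) * (2*eps)^(n-1) / fact (n-1)
            + (\<Sum>l=2..n. (1 - 2*eps)^l * (2*eps)^(n-l) / (fact (n-l) * P beta l))"
    using d_T split_T by presburger
  have 2: "\<forall>n::nat. n \<ge> 1 \<longrightarrow> d eps beta n < (suminf tt + 1) * (4*eps)^n / fact n"
  proof (intro allI impI)
    fix n :: nat assume n: "n \<ge> 1"
    have "0 < (4*eps)^n / fact n" using assms by simp
    then have "suminf tt * (4*eps)^n / fact n < (suminf tt + 1) * (4*eps)^n / fact n"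
      by (simp add: distrib_right add_divide_distrib)
    then show "d eps beta n < (suminf tt + 1) * (4*eps)^n / fact n"
      using d_bound[OF n] by linarith
  qed
  show ?thesis using 1 2 unfolding P_def S_def by blast
qed

end
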